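(* Let $S_1=(x_1,y_1),S_2=(x_2,y_2),S_3=(x_3,y_3),S_4=(x_4,y_4)$ be four points in the plane with $x_1\le x_2\le x_3\le x_4$. Let $\delta_1,\delta_2,\delta_3,\delta_4$ be positive integers, where $\delta_j$ is the number of times $S_j$ occurs in the data. For $i\in\{1,\dots,4\}$ define the pivot point $P_i=(\tilde x_i,\tilde y_i)$ by $$\tilde x_i=x_i+\frac{\sum_{j=1}^4\delta_j(x_j-x_i)^2}{\sum_{j=1}^4\delta_j(x_j-x_i)},\qquad \tilde y_i=y_i+\frac{\sum_{j=1}^4\delta_j(x_j-x_i)(y_j-y_i)}{\sum_{j=1}^4\delta_j(x_j-x_i)},$$ whenever the denominator is nonzero. Then, whenever defined, $P_4$ lies in the closed triangle (convex hull) with vertices $S_1,S_2,S_3$, and $P_1$ lies in the closed triangle (convex hull) with vertices $S_2,S_3,S_4$. That is, the pivot points of an outermost point on the $x$-axis lie in the triangle formed by the other three points.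
   Context: The pivot point $P_i$ is the point through which the least-squares regression line of the data, in which each $S_j$ appears $\delta_j$ times, always passes regardless of how many additional copies of $S_i$ are added. It is considered undefined (at infinity) when $\sum_j\delta_j(x_j-x_i)=0$. *)

theory Defs
  imports "HOL-Analysis.Analysis"
begin

definition pivot_denom :: "(nat \<Rightarrow> real) \<Rightarrow> (nat \<Rightarrow> nat) \<Rightarrow> nat \<Rightarrow> real" where
  "pivot_denom x d i = (\<Sum>j=1..4. real (d j) * (x j - x i))"

definition pivot :: "(nat \<Rightarrow> real) \<Rightarrow> (nat \<Rightarrow> real) \<Rightarrow> (nat \<Rightarrow> nat) \<Rightarrow> nat \<Rightarrow> real \<times> real" where
  "pivot x y d i =
     (x i + (\<Sum>j=1..4. real (d j) * (x j - x i)^2) / pivot_denom x d i,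
      y i + (\<Sum>j=1..4. real (d j) * (x j - x i) * (y j - y i)) / pivot_denom x d i)"

end

theory Submission
  imports Defs begin
lemma sum4: "(\<Sum>j=(1::nat)..4. f j) = f 1 + f 2 + f 3 + (f 4 :: real)"
  by (simp add: eval_nat_numeral)
lemma hull3:
  fixes a1 a2 a3 p1 p2 p3 q1 q2 q3 :: real
  assumes "a1 \<ge> 0" "a2 \<ge> 0" "a3 \<ge> 0" "a1 + a2 + a3 \<noteq> 0"
  shows "((a1*p1 + a2*p2 + a3*p3)/(a1+a2+a3), (a1*q1 + a2*q2 + a3*q3)/(a1+a2+a3))
           \<in> convex hull {(p1,q1),(p2,q2),(p3,q3)}"
proof -
  let ?W = "a1+a2+a3"
  have W: "?W > 0" using assms by linarith
  have "((a1*p1 + a2*p2 + a3*p3)/?W, (a1*q1 + a2*q2 + a3*q3)/?W)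
     = (a1/?W) *\<^sub>R (p1,q1) + (a2/?W) *\<^sub>R (p2,q2) + (a3/?W) *\<^sub>R (p3,q3)"
    by (simp add: add_divide_distrib)
  moreover have "a1/?W + a2/?W + a3/?W = 1" using W by (simp add: add_divide_distrib[symmetric])
  ultimately show ?thesis
    unfolding convex_hull_3 using assms W
    by (intro CollectI exI[of _ "a1/?W"] exI[of _ "a2/?W"] exI[of _ "a3/?W"]) simp
qed
theorem proposition2:
  fixes x y :: "nat \<Rightarrow> real" and d :: "nat \<Rightarrow> nat"
  assumes "x 1 \<le> x 2" "x 2 \<le> x 3" "x 3 \<le> x 4"
    and "\<And>j. j \<in> {1..4} \<Longrightarrow> d j > 0"
  shows "(pivot_denom x d 4 \<noteq> 0 \<longrightarrow>
            pivot x y d 4 \<in> convex hull {(x 1, y 1), (x 2, y 2), (x 3, y 3)})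
       \<and> (pivot_denom x d 1 \<noteq> 0 \<longrightarrow>
            pivot x y d 1 \<in> convex hull {(x 2, y 2), (x 3, y 3), (x 4, y 4)})"
proof (intro conjI impI)
  assume D: "pivot_denom x d 4 \<noteq> 0"
  define a where "a j = real (d j) * (x 4 - x j)" for j
  have a: "a 1 \<ge> 0" "a 2 \<ge> 0" "a 3 \<ge> 0" using assms unfolding a_def by auto
  have Dv: "pivot_denom x d 4 = - (a 1 + a 2 + a 3)"
    unfolding pivot_denom_def sum4 a_def by (simp add: algebra_simps)
  have W: "a 1 + a 2 + a 3 \<noteq> 0" using D Dv by simp
  have "pivot x y d 4 = ((a 1*x 1 + a 2*x 2 + a 3*x 3)/(a 1+a 2+a 3),
                          (a 1*y 1 + a 2*y 2 + a 3*y 3)/(a 1+a 2+a 3))"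
  proof -
    have e1: "(\<Sum>j=1..4. real (d j) * (x j - x 4)^2) = a 1 * (x 4 - x 1) + a 2 * (x 4 - x 2) + a 3 * (x 4 - x 3)"
      unfolding sum4 a_def by (simp add: power2_eq_square algebra_simps)
    have e2: "(\<Sum>j=1..4. real (d j) * (x j - x 4) * (y j - y 4)) = - (a 1 * (y 1 - y 4) + a 2 * (y 2 - y 4) + a 3 * (y 3 - y 4))"
      unfolding sum4 a_def by (simp add: algebra_simps)
    show ?thesis unfolding pivot_def Dv e1 e2 using W
      by (simp add: divide_simps) (simp add: algebra_simps)
  qed
  then show "pivot x y d 4 \<in> convex hull {(x 1, y 1), (x 2, y 2), (x 3, y 3)}"
    using hull3[OF a W] by simp
next
  assume D: "pivot_denom x d 1 \<noteq> 0"
  define a where "a j = real (d j) * (x j - x 1)" for j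
  have a: "a 2 \<ge> 0" "a 3 \<ge> 0" "a 4 \<ge> 0" using assms unfolding a_def by auto
  have Dv: "pivot_denom x d 1 = a 2 + a 3 + a 4"
    unfolding pivot_denom_def sum4 a_def by (simp add: algebra_simps)
  have W: "a 2 + a 3 + a 4 \<noteq> 0" using D Dv by simp
  have "pivot x y d 1 = ((a 2*x 2 + a 3*x 3 + a 4*x 4)/(a 2+a 3+a 4),
                          (a 2*y 2 + a 3*y 3 + a 4*y 4)/(a 2+a 3+a 4))"
  proof -
    have e1: "(\<Sum>j=1..4. real (d j) * (x j - x 1)^2) = a 2 * (x 2 - x 1) + a 3 * (x 3 - x 1) + a 4 * (x 4 - x 1)"
      unfolding sum4 a_def by (simp add: power2_eq_square algebra_simps)
    have e2: "(\<Sum>j=1..4. real (d j) * (x j - x 1) * (y j - y 1)) = a 2 * (y 2 - y 1) + a 3 * (y 3 - y 1) + a 4 * (y 4 - y 1)"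
      unfolding sum4 a_def by (simp add: algebra_simps)
    show ?thesis unfolding pivot_def Dv e1 e2 using W
      by (simp add: divide_simps) (simp add: algebra_simps)
  qed
  then show "pivot x y d 1 \<in> convex hull {(x 2, y 2), (x 3, y 3), (x 4, y 4)}"
    using hull3[OF a W] by simp
qed

end
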